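(* Let $\ell\geq 1$, let $G\subseteq\mathcal{G}_\Sigma^\ell$ be a non-empty finite set of generalized strings of length $\ell$, and let $(Q,\Sigma,\Delta,Q_\alpha,F)=\mathrm{NFA}(G)$. Then for every $s\in\Sigma^*$: there exists $q\in Q_\alpha$ with $\hat\Delta(q,s)\cap F\neq\emptyset$ if and only if there exists $g\in G$ such that $s\vartriangleleft g$.
   Context: For a finite alphabet $\Sigma$, $\mathcal{G}_\Sigma=\mathcal{P}(\Sigma)\setminus\{\emptyset\}$ and a generalized string is a finite string $g=g[1]\cdots g[|g|]$ over $\mathcal{G}_\Sigma$; $\mathcal{G}_\Sigma^\ell$ is the set of generalized strings of length $\ell$. A string $s\in\Sigma^*$ matches $g$, written $s\vartriangleleft g$, if $|s|=|g|$ and $s[i]\in g[i]$ for all $1\le i\le|g|$. Construction of $\mathrm{NFA}(G)$: let $\bar Q=\mathcal{P}(G)\times\{0,\dots,\ell\}$ and define $\mathrm{Parent}:\bar Q\times\Sigma\to\bar Q\cup\{\bot\}$ by $\mathrm{Parent}((H,k),\sigma)=(\{h\in H:\sigma\in h[k]\},k-1)$ if $k>0$ and $\bot$ if $k=0$. Set $Q_\ell=\{(G,\ell)\}$ and, for $i=\ell-1,\dots,0$, $Q_i=\{(H,i): H\subseteq G,\ H\neq\emptyset,\ \exists q\in Q_{i+1},\sigma\in\Sigma \text{ with } \mathrm{Parent}(q,\sigma)=(H,i)\}$. Let $Q=Q_0\cup\dots\cup Q_\ell$, $\Delta((H,k),\sigma)=\{q\in Q_{k+1}:\mathrm{Parent}(q,\sigma)=(H,k)\}$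 if $k<\ell$ and $\emptyset$ if $k=\ell$, $Q_\alpha=Q_0$, $F=Q_\ell$. Then $\mathrm{NFA}(G)=(Q,\Sigma,\Delta,Q_\alpha,F)$. $\hat\Delta$ denotes the extension of $\Delta$ to strings: $\hat\Delta(q,\varepsilon)=\{q\}$, $\hat\Delta(q,\sigma s)=\bigcup_{p\in\Delta(q,\sigma)}\hat\Delta(p,s)$. *)

theory Defs
  imports Main
begin

text \<open>Alphabet: a finite carrier set Sig. A generalized string of length l is a list
  of length l of non-empty subsets of Sig. Positions are 1-based in the paper;
  g[k] is rendered as g ! (k - 1).\<close>

definition gen_strings :: "'a set \<Rightarrow> nat \<Rightarrow> 'a set list set" where
  "gen_strings Sig l = {g. length g = l \<and> (\<forall>x\<in>set g. x \<subseteq> Sig \<and> x \<noteq> {})}"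

definition matches :: "'a list \<Rightarrow> 'a set list \<Rightarrow> bool" where
  "matches s g \<longleftrightarrow> length s = length g \<and> (\<forall>i<length g. s ! i \<in> g ! i)"

type_synonym 'a state = "'a set list set \<times> nat"

text \<open>Parent((H,k),sigma); None plays the role of bottom.\<close>
definition parent :: "'a state \<Rightarrow> 'a \<Rightarrow> 'a state option" where
  "parent q \<sigma> = (case q of (H, k) \<Rightarrow>
     if k > 0 then Some ({h \<in> H. \<sigma> \<in> h ! (k - 1)}, k - 1) else None)"

text \<open>levQ Sig G l d = Q_(l-d), built downwards from Q_l = {(G,l)}.\<close>
fun levQ :: "'a set \<Rightarrow> 'a set list set \<Rightarrow> nat \<Rightarrow> nat \<Rightarrow> 'a state set" where
  "levQ Sig G l 0 = {(G, l)}"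
| "levQ Sig G l (Suc d) =
     {(H, i) | H i. i = l - Suc d \<and> H \<subseteq> G \<and> H \<noteq> {} \<and>
        (\<exists>q\<in>levQ Sig G l d. \<exists>\<sigma>\<in>Sig. parent q \<sigma> = Some (H, i))}"

definition Qi :: "'a set \<Rightarrow> 'a set list set \<Rightarrow> nat \<Rightarrow> nat \<Rightarrow> 'a state set" where
  "Qi Sig G l i = levQ Sig G l (l - i)"

definition nfa_Delta :: "'a set \<Rightarrow> 'a set list set \<Rightarrow> nat \<Rightarrow> 'a state \<Rightarrow> 'a \<Rightarrow> 'a state set" where
  "nfa_Delta Sig G l q \<sigma> = (case q of (H, k) \<Rightarrow>
     if k < l then {p \<in> Qi Sig G l (k + 1). parent p \<sigma> = Some (H, k)} else {})"

text \<open>NFA(G) = (Q, Delta, Q_alpha, F); the alphabet component is Sig itself.\<close>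
definition NFA :: "'a set \<Rightarrow> 'a set list set \<Rightarrow> nat \<Rightarrow>
    'a state set \<times> ('a state \<Rightarrow> 'a \<Rightarrow> 'a state set) \<times> 'a state set \<times> 'a state set" where
  "NFA Sig G l = ((\<Union>i\<in>{0..l}. Qi Sig G l i), nfa_Delta Sig G l,
                    Qi Sig G l 0, Qi Sig G l l)"

fun Delta_hat :: "('q \<Rightarrow> 'a \<Rightarrow> 'q set) \<Rightarrow> 'q \<Rightarrow> 'a list \<Rightarrow> 'q set" where
  "Delta_hat \<Delta> q [] = {q}"
| "Delta_hat \<Delta> q (\<sigma> # s) = (\<Union>p\<in>\<Delta> q \<sigma>. Delta_hat \<Delta> p s)"

end

theory Submission
  imports Defs
begin

definition filt :: "'a set list set \<Rightarrow> nat \<Rightarrow> 'a list \<Rightarrow> 'a set list set" where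
  "filt G k s = {g\<in>G. \<forall>j<length s. s!j \<in> g!(k+j)}"

lemma filt_Nil: "filt G k [] = G" by (simp add: filt_def)

lemma filt_Cons: "filt G k (\<sigma>#s) = {h \<in> filt G (k+1) s. \<sigma> \<in> h!k}"
proof -
  have "(\<forall>j<Suc (length s). (\<sigma>#s)!j \<in> g!(k+j)) \<longleftrightarrow>
        (\<sigma> \<in> g!k \<and> (\<forall>j<length s. s!j \<in> g!(k+1+j)))" for g
    by (auto simp: less_Suc_eq_0_disj)
  then show ?thesis by (auto simp: filt_def)
qed

lemma sound:
  "p \<in> Delta_hat (nfa_Delta Sig G l) (H,k) s \<Longrightarrow> p = (G,l) \<Longrightarrow>
   k + length s = l \<and> H = filt G k s"
proof (induction s arbitrary: H k p)
  case Nil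
  then show ?case by (simp add: filt_Nil)
next
  case (Cons \<sigma> s)
  from Cons.prems(1) obtain p' where p': "p' \<in> nfa_Delta Sig G l (H,k) \<sigma>"
    and pp: "p \<in> Delta_hat (nfa_Delta Sig G l) p' s" by auto
  obtain H' k' where pe: "p' = (H',k')" by (cases p')
  from p' pe have kl: "k < l" and par: "parent (H',k') \<sigma> = Some (H,k)"
    by (auto simp: nfa_Delta_def split: if_splits)
  from par have k': "k' = Suc k" and HH: "H = {h\<in>H'. \<sigma> \<in> h!k}"
    by (auto simp: parent_def split: if_splits)
  from Cons.IH[OF pp[unfolded pe] Cons.prems(2)] k' have
    "Suc k + length s = l" "H' = filt G (k+1) s" by auto
  then show ?case using HH by (simp add: filt_Cons)
qed

lemma complete:
  "k \<le> l \<Longrightarrow> length s = l - k \<Longrightarrow> set s \<subseteq> Sig \<Longrightarrow> filt G k s \<noteq> {} \<Longrightarrow>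
   (filt G k s, k) \<in> levQ Sig G l (l-k) \<and> (G,l) \<in> Delta_hat (nfa_Delta Sig G l) (filt G k s, k) s"
proof (induction s arbitrary: k)
  case Nil
  then show ?case by (simp add: filt_Nil)
next
  case (Cons \<sigma> s)
  have kl: "k < l" "length s = l - (k+1)" "k+1 \<le> l" using Cons.prems by auto
  have ne: "filt G (k+1) s \<noteq> {}" using Cons.prems(4) by (auto simp: filt_Cons)
  from Cons.IH[OF kl(3) kl(2) _ ne] Cons.prems(3) have
    ih: "(filt G (k+1) s, k+1) \<in> levQ Sig G l (l-(k+1))"
        "(G,l) \<in> Delta_hat (nfa_Delta Sig G l) (filt G (k+1) s, k+1) s" by auto
  have par: "parent (filt G (k+1) s, k+1) \<sigma> = Some (filt G k (\<sigma>#s), k)"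
    by (simp add: parent_def filt_Cons)
  have ld: "l - k = Suc (l-(k+1))" using kl by auto
  have sub: "filt G k (\<sigma>#s) \<subseteq> G" by (auto simp: filt_def)
  have sig: "\<sigma> \<in> Sig" using Cons.prems(3) by auto
  have A: "(filt G k (\<sigma>#s), k) \<in> levQ Sig G l (l-k)"
    unfolding ld levQ.simps
    using ih(1) par sub Cons.prems(4) sig kl by (auto intro!: bexI[of _ \<sigma>] exI[of _ "filt G k (\<sigma>#s)"])
  have inD: "(filt G (k+1) s, k+1) \<in> nfa_Delta Sig G l (filt G k (\<sigma>#s), k) \<sigma>"
    using kl ih(1) par by (simp add: nfa_Delta_def Qi_def)
  have B: "(G,l) \<in> Delta_hat (nfa_Delta Sig G l) (filt G k (\<sigma>#s), k) (\<sigma>#s)"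
    using inD ih(2) by auto
  show ?case using A B by simp
qed

theorem mainTheorem5:
  fixes Sig :: "'a set" and G :: "'a set list set" and l :: nat
  assumes "finite Sig"
    and "l \<ge> 1"
    and "G \<subseteq> gen_strings Sig l" and "G \<noteq> {}" and "finite G"
    and "NFA Sig G l = (Q, \<Delta>, Q\<^sub>\<alpha>, F)"
    and "set s \<subseteq> Sig"
  shows "(\<exists>q\<in>Q\<^sub>\<alpha>. Delta_hat \<Delta> q s \<inter> F \<noteq> {}) \<longleftrightarrow> (\<exists>g\<in>G. matches s g)"
proof -
  have D: "\<Delta> = nfa_Delta Sig G l" and QA: "Q\<^sub>\<alpha> = levQ Sig G l l" and FF: "F = {(G,l)}"
    using assms(6) by (auto simp: NFA_def Qi_def)
  obtain d where ld: "l = Suc d" using assms(2) by (cases l) auto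
  show ?thesis
  proof
    assume "\<exists>q\<in>Q\<^sub>\<alpha>. Delta_hat \<Delta> q s \<inter> F \<noteq> {}"
    then obtain H k where q: "(H,k) \<in> levQ Sig G l l" and r: "(G,l) \<in> Delta_hat \<Delta> (H,k) s"
      using QA FF by auto
    from q have "k = 0" "H \<noteq> {}" unfolding ld by auto
    with sound[OF r[unfolded D]] have "length s = l" "filt G 0 s \<noteq> {}" by auto
    then obtain g where g: "g \<in> G" "\<forall>j<length s. s!j \<in> g!j" by (auto simp: filt_def)
    with assms(3) have "length g = l" by (auto simp: gen_strings_def)
    with g \<open>length s = l\<close> show "\<exists>g\<in>G. matches s g" unfolding matches_def by (intro bexI[of _ g]) auto
  next
    assume "\<exists>g\<in>G. matches s g"
    then obtain g where g: "g \<in> G" "matches s g" by auto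
    with assms(3) have "length g = l" by (auto simp: gen_strings_def)
    with g have len: "length s = l" and ne: "filt G 0 s \<noteq> {}"
      by (auto simp: matches_def filt_def)
    from complete[of 0 l s Sig G] len ne assms(7) show "\<exists>q\<in>Q\<^sub>\<alpha>. Delta_hat \<Delta> q s \<inter> F \<noteq> {}"
      using QA FF D by auto
  qed
qed

end
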